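(* Let $S_j$ be local potentials satisfying (A)–(E), let $\omega\in\mathbb{R}^d\setminus\mathbb{Q}^d$, and let $x$ be a Birkhoff global minimizer with rotation vector $\omega$ such that $\tau_{k,l}x=x$ whenever $\langle\omega,k\rangle+l=0$. Then the recurrent set $\mathcal{M}(x)$ is, in the topology of pointwise convergence, either connected or a Cantor set (closed, perfect and totally disconnected).
   Context: Notation: $\|i\|=\sum_{k=1}^d|i_k|$, $B_j^r=\{k:\|k-j\|\le r\}$, $(\tau_{k,l}x)_i=x_{i+k}+l$. Local potentials $S_j:\mathbb{R}^{\mathbb{Z}^d}\to\mathbb{R}$, $j\in\mathbb{Z}^d$, satisfy: (A) there is $r\in(0,\infty)$ and $C^2$ functions $s_j:\mathbb{R}^{B_j^r}\to\mathbb{R}$ with $S_j(x)=s_j(x|_{B_j^r})$; (B) $S_j(\tau_{k,l}x)=S_{j+k}(x)$; (C) each $S_j$ is bounded below and $S_j(x)\to\infty$ as $|x_k-x_j|\to\infty$ whenever $\|k-j\|=1$; (D) $\partial_{i,k}S_j\le0$ for $i\ne k$, and $\partial_{i,k}S_i<0$ when $\|i-k\|=1$; (E) $|\partial_{i,k}S_j|\le C$ uniformly. Birkhoff: for every $(k,l)$, $\tau_{k,l}x\ge x$ or $\tau_{k,l}x\le x$ (pointwise order). Rotation vector $\omega$: $\lim_n x_{ni}/n=\langle\omega,i\rangle$ for all $i$. For finite $B$: $W_B=\sum_{j\in B}S_j$, $\mathring{B}^{(r)}=\{i\in B:B_i^r\subset B\}$; $x$ is a global minimizer if $W_B(x+y)\ge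 W_B(x)$ for all finite $B$ and all $y$ supported in $\mathring{B}^{(r)}$. $\widetilde{\mathcal{M}}(x)$ is the closure (in the topology of pointwise convergence) of $\{\tau_{k,l}x:(k,l)\in\mathbb{Z}^d\times\mathbb{Z}\}$, and $\mathcal{M}(x)=\{y\in\widetilde{\mathcal{M}}(x): y=\lim_{n\to\infty}\tau_{k_n,l_n}y\text{ pointwise for some sequence }(k_n,l_n)\text{ with }\langle\omega,k_n\rangle+l_n\ne0\}$. *)

theory Defs
  imports "HOL-Analysis.Analysis"
begin

text \<open>The type of configurations carries the product topology (= pointwise convergence).\<close>

type_synonym 'd site = "int ^ 'd"
type_synonym 'd config = "int ^ 'd \<Rightarrow> real"

definition l1norm :: "int ^ 'd::finite \<Rightarrow> int" where
  "l1norm i = (\<Sum>a\<in>UNIV. \<bar>i $ a\<bar>)"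

definition ball_l1 :: "int ^ 'd::finite \<Rightarrow> real \<Rightarrow> (int ^ 'd) set" where
  "ball_l1 j r = {k. real_of_int (l1norm (k - j)) \<le> r}"

definition tau :: "int ^ 'd::finite \<Rightarrow> int \<Rightarrow> 'd config \<Rightarrow> 'd config" where
  "tau k l x = (\<lambda>i. x (i + k) + real_of_int l)"

definition ip :: "real ^ 'd::finite \<Rightarrow> int ^ 'd \<Rightarrow> real" where
  "ip \<omega> k = (\<Sum>a\<in>UNIV. \<omega> $ a * real_of_int (k $ a))"

definition has_pd :: "(('i \<Rightarrow> real) \<Rightarrow> real) \<Rightarrow> 'i \<Rightarrow> ('i \<Rightarrow> real) \<Rightarrow> real \<Rightarrow> bool" where
  "has_pd F i x D \<longleftrightarrow> ((\<lambda>t. F (x(i := x i + t))) has_real_derivative D) (at 0)"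

definition pd :: "(('i \<Rightarrow> real) \<Rightarrow> real) \<Rightarrow> 'i \<Rightarrow> ('i \<Rightarrow> real) \<Rightarrow> real" where
  "pd F i x = deriv (\<lambda>t. F (x(i := x i + t))) 0"

definition local_C2 :: "'i set \<Rightarrow> (('i \<Rightarrow> real) \<Rightarrow> real) \<Rightarrow> bool" where
  "local_C2 B F \<longleftrightarrow> finite B
     \<and> (\<forall>x y. (\<forall>i\<in>B. x i = y i) \<longrightarrow> F x = F y)
     \<and> continuous_on UNIV F
     \<and> (\<forall>i x. \<exists>D. has_pd F i x D)
     \<and> (\<forall>i. continuous_on UNIV (pd F i))
     \<and> (\<forall>i k x. \<exists>D. has_pd (pd F i) k x D)
     \<and> (\<forall>i k. continuous_on UNIV (pd (pd F i) k))"

definition local_potentials :: "real \<Rightarrow> ('d::finite site \<Rightarrow> 'd config \<Rightarrow> real) \<Rightarrow> bool" where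
  "local_potentials r S \<longleftrightarrow>
     0 < r
     \<and> (\<forall>j. local_C2 (ball_l1 j r) (S j))
     \<and> (\<forall>j k l x. S j (tau k l x) = S (j + k) x)
     \<and> (\<forall>j. bdd_below (range (S j)))
     \<and> (\<forall>j k. l1norm (k - j) = 1 \<longrightarrow>
           (\<forall>M. \<exists>R. \<forall>x. \<bar>x k - x j\<bar> \<ge> R \<longrightarrow> S j x \<ge> M))
     \<and> (\<forall>i k j x. i \<noteq> k \<longrightarrow> pd (pd (S j) i) k x \<le> 0)
     \<and> (\<forall>i k x. l1norm (i - k) = 1 \<longrightarrow> pd (pd (S i) i) k x < 0)
     \<and> (\<exists>C. \<forall>i k j x. \<bar>pd (pd (S j) i) k x\<bar> \<le> C)"

definition W :: "('d::finite site \<Rightarrow> 'd config \<Rightarrow> real) \<Rightarrow> 'd site set \<Rightarrow> 'd config \<Rightarrow> real" where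
  "W S B x = (\<Sum>j\<in>B. S j x)"

definition interior_r :: "real \<Rightarrow> 'd::finite site set \<Rightarrow> 'd site set" where
  "interior_r r B = {i\<in>B. ball_l1 i r \<subseteq> B}"

definition global_minimizer :: "real \<Rightarrow> ('d::finite site \<Rightarrow> 'd config \<Rightarrow> real) \<Rightarrow> 'd config \<Rightarrow> bool" where
  "global_minimizer r S x \<longleftrightarrow>
     (\<forall>B y. finite B \<longrightarrow> (\<forall>i. i \<notin> interior_r r B \<longrightarrow> y i = 0) \<longrightarrow>
        W S B (\<lambda>i. x i + y i) \<ge> W S B x)"

definition birkhoff :: "'d::finite config \<Rightarrow> bool" where
  "birkhoff x \<longleftrightarrow> (\<forall>k l. tau k l x \<ge> x \<or> tau k l x \<le> x)"

definition has_rotation_vector :: "'d::finite config \<Rightarrow> real ^ 'd \<Rightarrow> bool" where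
  "has_rotation_vector x \<omega> \<longleftrightarrow>
     (\<forall>i. (\<lambda>n::nat. x (int n *s i) / real n) \<longlonglongrightarrow> ip \<omega> i)"

definition Mtilde :: "'d::finite config \<Rightarrow> 'd config set" where
  "Mtilde x = closure {tau k l x | k l. True}"

definition Mrec :: "real ^ 'd::finite \<Rightarrow> 'd config \<Rightarrow> 'd config set" where
  "Mrec \<omega> x = {y \<in> Mtilde x. \<exists>ks ls. (\<forall>n. ip \<omega> (ks n) + real_of_int (ls n) \<noteq> 0)
                  \<and> (\<lambda>n. tau (ks n) (ls n) y) \<longlonglongrightarrow> y}"

definition perfect_set :: "'a::topological_space set \<Rightarrow> bool" where
  "perfect_set A \<longleftrightarrow> (\<forall>y\<in>A. y islimpt A)"

definition totally_disconnected_set :: "'a::topological_space set \<Rightarrow> bool" where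
  "totally_disconnected_set A \<longleftrightarrow> (\<forall>C\<subseteq>A. connected C \<longrightarrow> (\<exists>a. C \<subseteq> {a}))"

definition cantor_set :: "'a::topological_space set \<Rightarrow> bool" where
  "cantor_set A \<longleftrightarrow> closed A \<and> perfect_set A \<and> totally_disconnected_set A"

end

theory Submission
  imports Defs "HOL-Analysis.Kronecker_Approximation_Theorem"
begin


lemma tendsto_fun_iff:
  fixes f :: "'c \<Rightarrow> 'a \<Rightarrow> 'b::topological_space"
  shows "(f \<longlongrightarrow> l) F \<longleftrightarrow> (\<forall>i. ((\<lambda>c. f c i) \<longlongrightarrow> l i) F)"
  using limitin_componentwise[of "\<lambda>i. euclidean" UNIV f l F]
  by (simp add: euclidean_product_topology)

lemma tau_tau: "tau k l (tau k' l' y) = tau (k + k') (l + l') y"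
  by (simp add: tau_def fun_eq_iff add.assoc add.commute add.left_commute)

lemma tau_00: "tau 0 0 y = y"
  by (simp add: tau_def)

lemma tau_mono: "y \<le> z \<Longrightarrow> tau k l y \<le> tau k l z"
  by (simp add: tau_def le_fun_def)

lemma tau_inj: "tau k l y = tau k l z \<Longrightarrow> y = z"
proof -
  assume h: "tau k l y = tau k l z"
  show "y = z"
  proof
    fix j
    have "tau k l y (j - k) = tau k l z (j - k)" using h by simp
    then show "y j = z j" by (simp add: tau_def)
  qed
qed

lemma ip_add: "ip \<omega> (a + b) = ip \<omega> a + ip \<omega> b"
  by (simp add: ip_def sum.distrib[symmetric] algebra_simps)

lemma ip_zero[simp]: "ip \<omega> 0 = 0"
  by (simp add: ip_def)

lemma ip_diff: "ip \<omega> (a - b) = ip \<omega> a - ip \<omega> b"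
  by (simp add: ip_def sum_subtractf[symmetric] algebra_simps)

lemma ip_smult: "ip \<omega> (c *s a) = real_of_int c * ip \<omega> a"
  by (simp add: ip_def sum_distrib_left algebra_simps)

lemma ip_axis: "ip \<omega> (axis a c) = \<omega> $ a * real_of_int c"
proof -
  have "ip \<omega> (axis a c) = (\<Sum>b\<in>UNIV. if b = a then \<omega> $ a * real_of_int c else 0)"
    unfolding ip_def by (rule sum.cong) (auto simp: axis_def)
  then show ?thesis by simp
qed



locale BK =
  fixes \<omega> :: "real ^ 'd::finite" and x :: "'d config"
  assumes irr: "\<exists>a. \<omega> $ a \<notin> \<rat>"
    and bk: "birkhoff x"
    and rot: "has_rotation_vector x \<omega>"
    and per: "\<forall>k l. ip \<omega> k + real_of_int l = 0 \<longrightarrow> tau k l x = x"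
begin

definition gv :: "int ^ 'd \<Rightarrow> int \<Rightarrow> real" where
  "gv k l = ip \<omega> k + real_of_int l"

definition orb :: "int ^ 'd \<Rightarrow> int \<Rightarrow> 'd config" where
  "orb k l = tau k l x"

lemma iter:
  assumes "orb k l \<le> x"
  shows "x (int n *s k) + real n * real_of_int l \<le> x 0"
proof (induction n)
  case 0 then show ?case by simp
next
  case (Suc n)
  have e: "int (Suc n) *s k = int n *s k + k"
    by (simp add: vec_eq_iff algebra_simps)
  have "x (int n *s k + k) + real_of_int l \<le> x (int n *s k)"
    using assms by (simp add: le_fun_def orb_def tau_def)
  then show ?case using Suc by (simp add: e algebra_simps)
qed

lemma fact1:
  assumes "gv k l > 0" shows "x \<le> orb k l"
proof (rule ccontr)
  assume nle: "\<not> x \<le> orb k l"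
  then have le: "orb k l \<le> x" using bk unfolding birkhoff_def orb_def by blast
  have lim1: "(\<lambda>n::nat. x (int n *s k) / real n) \<longlonglongrightarrow> ip \<omega> k"
    using rot unfolding has_rotation_vector_def by blast
  have lim2: "(\<lambda>n::nat. x 0 * inverse (real n) - real_of_int l) \<longlonglongrightarrow> x 0 * 0 - real_of_int l"
    by (intro tendsto_intros tendsto_inverse_0_at_top
        filterlim_real_sequentially)
  have ev: "eventually (\<lambda>n::nat. x (int n *s k) / real n \<le> x 0 * inverse (real n) - real_of_int l) sequentially"
  proof (rule eventually_sequentiallyI[of 1])
    fix n :: nat assume "1 \<le> n"
    then have np: "real n > 0" by simp
    have "x (int n *s k) \<le> x 0 - real n * real_of_int l" using iter[OF le, of n] by simp
    then have "x (int n *s k) / real n \<le> (x 0 - real n * real_of_int l) / real n"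
      using np by (simp add: divide_right_mono)
    also have "\<dots> = x 0 * inverse (real n) - real_of_int l"
      using np by (simp add: field_simps)
    finally show "x (int n *s k) / real n \<le> x 0 * inverse (real n) - real_of_int l" .
  qed
  have "ip \<omega> k \<le> x 0 * 0 - real_of_int l"
    by (rule tendsto_le[OF _ lim2 lim1 ev]) simp
  then show False using assms by (simp add: gv_def)
qed

lemma fact1': "gv k l \<ge> 0 \<Longrightarrow> x \<le> orb k l"
  using fact1[of k l] per by (force simp: gv_def orb_def)

lemma mono_orb:
  assumes "gv k l \<le> gv k' l'" shows "orb k l \<le> orb k' l'"
proof -
  have "gv (k' - k) (l' - l) \<ge> 0" using assms by (simp add: gv_def ip_diff)
  then have "x \<le> orb (k' - k) (l' - l)" by (rule fact1')
  then have "tau k l x \<le> tau k l (orb (k' - k) (l' - l))" by (rule tau_mono)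
  also have "\<dots> = orb k' l'" by (simp add: orb_def tau_tau)
  finally show ?thesis by (simp add: orb_def)
qed

lemma eq_orb: "gv k l = gv k' l' \<Longrightarrow> orb k l = orb k' l'"
  using mono_orb[of k l k' l'] mono_orb[of k' l' k l] by simp

lemma gv_00[simp]: "gv 0 l = real_of_int l" by (simp add: gv_def)
lemma orb_00: "orb 0 0 = x" by (simp add: orb_def tau_00)
lemma orb_0l: "orb 0 l i = x i + real_of_int l" by (simp add: orb_def tau_def)
lemma orb_apply: "orb k l i = x (i + k) + real_of_int l" by (simp add: orb_def tau_def)

lemma fact2:
  "x (i + k) - x i \<le> ip \<omega> k + 1 \<and> ip \<omega> k - 1 \<le> x (i + k) - x i"
proof
  let ?l = "\<lfloor>- ip \<omega> k\<rfloor>"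
  have "gv k ?l \<le> gv 0 0" by (simp add: gv_def) linarith
  then have "orb k ?l \<le> orb 0 0" by (rule mono_orb)
  then have "orb k ?l i \<le> x i" by (simp add: orb_00 le_fun_def)
  then show "x (i + k) - x i \<le> ip \<omega> k + 1" by (simp add: orb_apply) linarith
next
  let ?l = "\<lceil>- ip \<omega> k\<rceil>"
  have "gv 0 0 \<le> gv k ?l" by (simp add: gv_def) linarith
  then have "orb 0 0 \<le> orb k ?l" by (rule mono_orb)
  then have "x i \<le> orb k ?l i" by (simp add: orb_00 le_fun_def)
  then show "ip \<omega> k - 1 \<le> x (i + k) - x i" by (simp add: orb_apply) linarith
qed

lemma orb_bound: "\<bar>orb k l i - x i - gv k l\<bar> \<le> 1"
  using fact2[of i k] by (simp add: orb_apply gv_def abs_le_iff)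

end


context BK
begin

lemma gv_add: "gv (k + k') (l + l') = gv k l + gv k' l'"
  by (simp add: gv_def ip_add)

lemma gv_diff: "gv (k - k') (l - l') = gv k l - gv k' l'"
  by (simp add: gv_def ip_diff)

lemma gv_smult: "gv (c *s k) (c * l) = real_of_int c * gv k l"
  by (simp add: gv_def ip_smult algebra_simps)

lemma small_pos: assumes "e > 0" shows "\<exists>k l. 0 < gv k l \<and> gv k l < e"
proof -
  obtain a where a: "\<omega> $ a \<notin> \<rat>" using irr by blast
  obtain N :: nat where N: "1 / real N < e" "N > 0"
    by (metis assms gr_zeroI inverse_eq_divide real_arch_inverse)
  obtain h q where hq: "0 < q" "\<bar>of_int q * \<omega> $ a - of_int h\<bar> < 1 / real N"
    using Dirichlet_approx[OF N(2), of "\<omega> $ a"] by blast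
  have ne: "of_int q * \<omega> $ a - of_int h \<noteq> 0"
  proof
    assume "of_int q * \<omega> $ a - of_int h = 0"
    then have "\<omega> $ a = of_int h / of_int q" using hq(1) by (simp add: field_simps)
    then show False using a by (simp add: Rats_divide)
  qed
  have g1: "gv (axis a q) (- h) = of_int q * \<omega> $ a - of_int h"
    by (simp add: gv_def ip_axis)
  have g2: "gv (axis a (- q)) h = - (of_int q * \<omega> $ a - of_int h)"
    by (simp add: gv_def ip_axis)
  show ?thesis
  proof (cases "of_int q * \<omega> $ a - of_int h > 0")
    case True then show ?thesis using hq N g1 by (metis abs_of_pos less_trans)
  next
    case False
    then have "- (of_int q * \<omega> $ a - of_int h) > 0" using ne by linarith
    then show ?thesis using hq N g2 ne
      by (metis abs_minus_cancel abs_of_pos less_trans)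
  qed
qed

lemma dense: assumes "a < b" shows "\<exists>k l. a < gv k l \<and> gv k l < b"
proof -
  obtain k l where kl: "0 < gv k l" "gv k l < b - a" using small_pos[of "b - a"] assms by auto
  define g where "g = gv k l"
  define n where "n = \<lfloor>a / g\<rfloor> + 1"
  have gp: "g > 0" using kl g_def by simp
  have "a / g < real_of_int n" "real_of_int n \<le> a / g + 1" unfolding n_def by linarith+
  then have "a < real_of_int n * g" "real_of_int n * g \<le> a + g"
    using gp by (simp_all add: field_simps)
  then have "a < gv (n *s k) (n * l)" "gv (n *s k) (n * l) < b"
    using kl by (simp_all add: gv_smult g_def)
  then show ?thesis by blast
qed

definition Lf :: "real \<Rightarrow> 'd config" where
  "Lf t = (\<lambda>i. Sup {orb k l i | k l. gv k l < t})"

definition Rf :: "real \<Rightarrow> 'd config" where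
  "Rf t = (\<lambda>i. Inf {orb k l i | k l. gv k l > t})"

lemma Lset_ne: "{orb k l i | k l. gv k l < t} \<noteq> {}"
proof -
  have "gv 0 (\<lfloor>t\<rfloor> - 1) < t" by simp linarith
  then show ?thesis by blast
qed

lemma Rset_ne: "{orb k l i | k l. gv k l > t} \<noteq> {}"
proof -
  have "gv 0 (\<lceil>t\<rceil> + 1) > t" by simp linarith
  then show ?thesis by blast
qed

lemma Lset_bdd: "bdd_above {orb k l i | k l. gv k l < t}"
proof (rule bdd_aboveI[of _ "x i + t + 1"])
  fix y assume "y \<in> {orb k l i | k l. gv k l < t}"
  then obtain k l where "y = orb k l i" "gv k l < t" by blast
  then show "y \<le> x i + t + 1" using orb_bound[of k l i] by (simp add: abs_le_iff)
qed

lemma Rset_bdd: "bdd_below {orb k l i | k l. gv k l > t}"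
proof (rule bdd_belowI[of _ "x i + t - 1"])
  fix y assume "y \<in> {orb k l i | k l. gv k l > t}"
  then obtain k l where "y = orb k l i" "gv k l > t" by blast
  then show "x i + t - 1 \<le> y" using orb_bound[of k l i] by (simp add: abs_le_iff)
qed

lemma orb_le_L: "gv k l < t \<Longrightarrow> orb k l \<le> Lf t"
  unfolding le_fun_def Lf_def by (auto intro!: cSup_upper Lset_bdd)

lemma R_le_orb: "gv k l > t \<Longrightarrow> Rf t \<le> orb k l"
  unfolding le_fun_def Rf_def by (auto intro!: cInf_lower Rset_bdd)

lemma L_le_orb: assumes "gv k l \<ge> t" shows "Lf t \<le> orb k l"
  unfolding le_fun_def Lf_def
proof
  fix i show "Sup {orb k l i | k l. gv k l < t} \<le> orb k l i"
  proof (rule cSup_least[OF Lset_ne])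
    fix y assume "y \<in> {orb k l i | k l. gv k l < t}"
    then obtain k' l' where "y = orb k' l' i" "gv k' l' < t" by blast
    then show "y \<le> orb k l i" using mono_orb[of k' l' k l] assms by (simp add: le_fun_def)
  qed
qed

lemma orb_le_R: assumes "gv k l \<le> t" shows "orb k l \<le> Rf t"
  unfolding le_fun_def Rf_def
proof
  fix i show "orb k l i \<le> Inf {orb k l i | k l. gv k l > t}"
  proof (rule cInf_greatest[OF Rset_ne])
    fix y assume "y \<in> {orb k l i | k l. gv k l > t}"
    then obtain k' l' where "y = orb k' l' i" "gv k' l' > t" by blast
    then show "orb k l i \<le> y" using mono_orb[of k l k' l'] assms by (simp add: le_fun_def)
  qed
qed

lemma L_le_R: "Lf t \<le> Rf t"
  unfolding le_fun_def
proof
  fix i show "Lf t i \<le> Rf t i"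
    unfolding Lf_def
  proof (rule cSup_least[OF Lset_ne])
    fix y assume "y \<in> {orb k l i | k l. gv k l < t}"
    then obtain k' l' where "y = orb k' l' i" "gv k' l' < t" by blast
    then show "y \<le> Rf t i" using orb_le_R[of k' l' t] by (simp add: le_fun_def)
  qed
qed

lemma L_mono: "s \<le> t \<Longrightarrow> Lf s \<le> Lf t"
  unfolding le_fun_def Lf_def
  by (auto intro!: cSup_subset_mono Lset_ne Lset_bdd) force

lemma R_mono: "s \<le> t \<Longrightarrow> Rf s \<le> Rf t"
  unfolding le_fun_def Rf_def
  by (auto intro!: cInf_superset_mono Rset_ne Rset_bdd) force

lemma R_le_L: assumes "s < t" shows "Rf s \<le> Lf t"
proof -
  obtain k l where "s < gv k l" "gv k l < t" using dense[OF assms] by blast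
  then show ?thesis using R_le_orb[of s k l] orb_le_L[of k l t] by (meson order_trans)
qed

lemma L_approx: assumes "e > 0" shows "\<exists>k l. gv k l < t \<and> Lf t i - e < orb k l i"
proof -
  have "Lf t i - e < Sup {orb k l i | k l. gv k l < t}" using assms by (simp add: Lf_def)
  then show ?thesis by (subst (asm) less_cSup_iff[OF Lset_ne Lset_bdd]) blast
qed

lemma R_approx: assumes "e > 0" shows "\<exists>k l. gv k l > t \<and> orb k l i < Rf t i + e"
proof -
  have "Inf {orb k l i | k l. gv k l > t} < Rf t i + e" using assms by (simp add: Rf_def)
  then show ?thesis by (subst (asm) cInf_less_iff[OF Rset_ne Rset_bdd]) blast
qed

end


context BK
begin

lemma orb_shift: "orb k' l' (i + k) + real_of_int l = orb (k' + k) (l' + l) i"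
  by (simp add: orb_apply algebra_simps)

lemma L_shift: "tau k l (Lf t) = Lf (t + gv k l)"
proof
  fix i
  have a: "Lf t (i + k) + real_of_int l \<le> Lf (t + gv k l) i"
  proof -
    have "Lf t (i + k) \<le> Lf (t + gv k l) i - real_of_int l"
      unfolding Lf_def[of t]
    proof (rule cSup_least[OF Lset_ne])
      fix y assume "y \<in> {orb k' l' (i + k) | k' l'. gv k' l' < t}"
      then obtain k' l' where y: "y = orb k' l' (i + k)" "gv k' l' < t" by blast
      have "gv (k' + k) (l' + l) < t + gv k l" using y by (simp add: gv_add)
      then have "orb (k' + k) (l' + l) i \<le> Lf (t + gv k l) i" using orb_le_L by (simp add: le_fun_def)
      then show "y \<le> Lf (t + gv k l) i - real_of_int l" using y orb_shift[of k' l' i k l] by simp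
    qed
    then show ?thesis by simp
  qed
  have b: "Lf (t + gv k l) i \<le> Lf t (i + k) + real_of_int l"
    unfolding Lf_def[of "t + gv k l"]
  proof (rule cSup_least[OF Lset_ne])
    fix y assume "y \<in> {orb k' l' i | k' l'. gv k' l' < t + gv k l}"
    then obtain k' l' where y: "y = orb k' l' i" "gv k' l' < t + gv k l" by blast
    have "gv (k' - k) (l' - l) < t" using y by (simp add: gv_diff)
    then have "orb (k' - k) (l' - l) (i + k) \<le> Lf t (i + k)" using orb_le_L by (simp add: le_fun_def)
    moreover have "orb (k' - k) (l' - l) (i + k) + real_of_int l = y"
      using y orb_shift[of "k' - k" "l' - l" i k l] by simp
    ultimately show "y \<le> Lf t (i + k) + real_of_int l" by simp
  qed
  show "tau k l (Lf t) i = Lf (t + gv k l) i" using a b by (simp add: tau_def)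
qed

lemma R_shift: "tau k l (Rf t) = Rf (t + gv k l)"
proof
  fix i
  have a: "Rf (t + gv k l) i \<le> Rf t (i + k) + real_of_int l"
  proof -
    have "Rf (t + gv k l) i - real_of_int l \<le> Rf t (i + k)"
      unfolding Rf_def[of t]
    proof (rule cInf_greatest[OF Rset_ne])
      fix y assume "y \<in> {orb k' l' (i + k) | k' l'. gv k' l' > t}"
      then obtain k' l' where y: "y = orb k' l' (i + k)" "gv k' l' > t" by blast
      have "gv (k' + k) (l' + l) > t + gv k l" using y by (simp add: gv_add)
      then have "Rf (t + gv k l) i \<le> orb (k' + k) (l' + l) i" using R_le_orb by (simp add: le_fun_def)
      then show "Rf (t + gv k l) i - real_of_int l \<le> y" using y orb_shift[of k' l' i k l] by simp
    qed
    then show ?thesis by simp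
  qed
  have b: "Rf t (i + k) + real_of_int l \<le> Rf (t + gv k l) i"
    unfolding Rf_def[of "t + gv k l"]
  proof (rule cInf_greatest[OF Rset_ne])
    fix y assume "y \<in> {orb k' l' i | k' l'. gv k' l' > t + gv k l}"
    then obtain k' l' where y: "y = orb k' l' i" "gv k' l' > t + gv k l" by blast
    have "gv (k' - k) (l' - l) > t" using y by (simp add: gv_diff)
    then have "Rf t (i + k) \<le> orb (k' - k) (l' - l) (i + k)" using R_le_orb by (simp add: le_fun_def)
    moreover have "orb (k' - k) (l' - l) (i + k) + real_of_int l = y"
      using y orb_shift[of "k' - k" "l' - l" i k l] by simp
    ultimately show "Rf t (i + k) + real_of_int l \<le> y" by simp
  qed
  show "tau k l (Rf t) i = Rf (t + gv k l) i" using a b by (simp add: tau_def)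
qed

definition Orb :: "'d config set" where
  "Orb = {tau k l x | k l. True}"

definition Bd :: "'d config set" where
  "Bd = {w. \<forall>i k. w (i + k) - w i \<le> ip \<omega> k + 1 \<and> ip \<omega> k - 1 \<le> w (i + k) - w i}"

lemma closed_Bd: "closed Bd"
  unfolding Bd_def
  by (intro closed_Collect_all closed_Collect_conj closed_Collect_le continuous_intros
      continuous_on_product_coordinates)

lemma Orb_Bd: "Orb \<subseteq> Bd"
proof
  fix w assume "w \<in> Orb"
  then obtain k' l' where w: "w = tau k' l' x" unfolding Orb_def by blast
  show "w \<in> Bd" unfolding Bd_def
  proof (intro CollectI allI)
    fix i k
    have "w (i + k) - w i = x ((i + k') + k) - x (i + k')"
      by (simp add: w tau_def algebra_simps)
    then show "w (i + k) - w i \<le> ip \<omega> k + 1 \<and> ip \<omega> k - 1 \<le> w (i + k) - w i"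
      using fact2[of "i + k'" k] by simp
  qed
qed

lemma Mtilde_Bd: "Mtilde x \<subseteq> Bd"
  unfolding Mtilde_def using Orb_Bd closed_Bd closure_minimal unfolding Orb_def by blast

lemma closed_Mtilde: "closed (Mtilde x)"
  unfolding Mtilde_def by simp

lemma orb_in_Mtilde: "orb k l \<in> Mtilde x"
  unfolding Mtilde_def orb_def by (rule closure_subset[THEN subsetD]) blast

lemma lemS:
  assumes w: "w \<in> Bd" and eq: "tau k l w = w"
  shows "gv k l = 0"
proof (rule ccontr)
  assume ne: "gv k l \<noteq> 0"
  have step: "w (p + k) + real_of_int l = w p" for p
    using fun_cong[OF eq, of p] by (simp add: tau_def)
  have it: "w (int n *s k) = w 0 - real n * real_of_int l" for n :: nat
  proof (induction n)
    case 0 then show ?case by simp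
  next
    case (Suc n)
    have e: "int (Suc n) *s k = int n *s k + k"
      by (simp add: vec_eq_iff algebra_simps)
    show ?case using Suc step[of "int n *s k"] by (simp add: e algebra_simps)
  qed
  have b: "\<bar>real n * gv k l\<bar> \<le> 1" for n :: nat
  proof -
    have "w (0 + int n *s k) - w 0 \<le> ip \<omega> (int n *s k) + 1 \<and>
          ip \<omega> (int n *s k) - 1 \<le> w (0 + int n *s k) - w 0"
      using w unfolding Bd_def by blast
    then show ?thesis using it[of n] by (simp add: ip_smult gv_def abs_le_iff algebra_simps)
  qed
  define n where "n = nat \<lceil>2 / \<bar>gv k l\<bar>\<rceil>"
  have "real n \<ge> 2 / \<bar>gv k l\<bar>" unfolding n_def by linarith
  then have "real n * \<bar>gv k l\<bar> \<ge> 2" using ne by (simp add: field_simps)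
  then show False using b[of n] by (simp add: abs_mult)
qed

lemma seq_below: "\<exists>ks ls. \<forall>n::nat. t - inverse (real (Suc n)) < gv (ks n) (ls n) \<and> gv (ks n) (ls n) < t"
proof -
  have "\<forall>n::nat. \<exists>p. t - inverse (real (Suc n)) < gv (fst p) (snd p) \<and> gv (fst p) (snd p) < t"
  proof
    fix n :: nat
    have "t - inverse (real (Suc n)) < t" by simp
    then obtain k l where "t - inverse (real (Suc n)) < gv k l" "gv k l < t" using dense by blast
    then show "\<exists>p. t - inverse (real (Suc n)) < gv (fst p) (snd p) \<and> gv (fst p) (snd p) < t"
      by (intro exI[of _ "(k, l)"]) simp
  qed
  then obtain f where "\<forall>n. t - inverse (real (Suc n)) < gv (fst (f n)) (snd (f n)) \<and> gv (fst (f n)) (snd (f n)) < t"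
    by (metis choice)
  then show ?thesis by (intro exI[of _ "\<lambda>n. fst (f n)"] exI[of _ "\<lambda>n. snd (f n)"]) simp
qed

lemma seq_above: "\<exists>ks ls. \<forall>n::nat. t < gv (ks n) (ls n) \<and> gv (ks n) (ls n) < t + inverse (real (Suc n))"
proof -
  have "\<forall>n::nat. \<exists>p. t < gv (fst p) (snd p) \<and> gv (fst p) (snd p) < t + inverse (real (Suc n))"
  proof
    fix n :: nat
    have "t < t + inverse (real (Suc n))" by simp
    then obtain k l where "t < gv k l" "gv k l < t + inverse (real (Suc n))" using dense by blast
    then show "\<exists>p. t < gv (fst p) (snd p) \<and> gv (fst p) (snd p) < t + inverse (real (Suc n))"
      by (intro exI[of _ "(k, l)"]) simp
  qed
  then obtain f where "\<forall>n. t < gv (fst (f n)) (snd (f n)) \<and> gv (fst (f n)) (snd (f n)) < t + inverse (real (Suc n))"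
    by (metis choice)
  then show ?thesis by (intro exI[of _ "\<lambda>n. fst (f n)"] exI[of _ "\<lambda>n. snd (f n)"]) simp
qed

lemma lim_below: assumes "\<forall>n::nat. t - inverse (real (Suc n)) < g n \<and> g n < t"
  shows "g \<longlonglongrightarrow> t"
proof (rule tendsto_sandwich[of "\<lambda>n. t - inverse (real (Suc n))" _ _ "\<lambda>n. t"])
  show "\<forall>\<^sub>F n in sequentially. t - inverse (real (Suc n)) \<le> g n" using assms by (simp add: less_imp_le)
  show "\<forall>\<^sub>F n in sequentially. g n \<le> t" using assms by (simp add: less_imp_le)
  show "(\<lambda>n. t - inverse (real (Suc n))) \<longlonglongrightarrow> t"
    using tendsto_diff[OF tendsto_const LIMSEQ_inverse_real_of_nat, of t] by simp
qed simp

lemma lim_above: assumes "\<forall>n::nat. t < g n \<and> g n < t + inverse (real (Suc n))"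
  shows "g \<longlonglongrightarrow> t"
proof (rule tendsto_sandwich[of "\<lambda>n. t" _ _ "\<lambda>n. t + inverse (real (Suc n))"])
  show "\<forall>\<^sub>F n in sequentially. t \<le> g n" using assms by (simp add: less_imp_le)
  show "\<forall>\<^sub>F n in sequentially. g n \<le> t + inverse (real (Suc n))" using assms by (simp add: less_imp_le)
  show "(\<lambda>n. t + inverse (real (Suc n))) \<longlonglongrightarrow> t"
    using tendsto_add[OF tendsto_const LIMSEQ_inverse_real_of_nat, of t] by simp
qed simp

lemma L_lim:
  assumes u: "\<forall>n. u n < t" "u \<longlonglongrightarrow> t"
  shows "(\<lambda>n. Lf (u n)) \<longlonglongrightarrow> Lf t"
  unfolding tendsto_fun_iff
proof
  fix i
  show "(\<lambda>n. Lf (u n) i) \<longlonglongrightarrow> Lf t i"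
  proof (rule order_tendstoI)
    fix a assume "a > Lf t i"
    then show "\<forall>\<^sub>F n in sequentially. Lf (u n) i < a"
    proof (intro always_eventually allI)
      fix n have "Lf (u n) i \<le> Lf t i" using L_mono[of "u n" t] u(1) by (simp add: le_fun_def less_imp_le)
      then show "Lf (u n) i < a" using \<open>a > Lf t i\<close> by simp
    qed
  next
    fix a assume a: "a < Lf t i"
    obtain k l where kl: "gv k l < t" "Lf t i - (Lf t i - a) < orb k l i"
      using L_approx[of "Lf t i - a" t i] a by auto
    have "\<forall>\<^sub>F n in sequentially. gv k l < u n" using order_tendstoD(1)[OF u(2) kl(1)] .
    then show "\<forall>\<^sub>F n in sequentially. a < Lf (u n) i"
    proof (rule eventually_mono)
      fix n assume "gv k l < u n"
      then have "orb k l i \<le> Lf (u n) i" using orb_le_L by (simp add: le_fun_def)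
      then show "a < Lf (u n) i" using kl by simp
    qed
  qed
qed

lemma R_lim:
  assumes u: "\<forall>n. u n > t" "u \<longlonglongrightarrow> t"
  shows "(\<lambda>n. Rf (u n)) \<longlonglongrightarrow> Rf t"
  unfolding tendsto_fun_iff
proof
  fix i
  show "(\<lambda>n. Rf (u n) i) \<longlonglongrightarrow> Rf t i"
  proof (rule order_tendstoI)
    fix a assume "a < Rf t i"
    then show "\<forall>\<^sub>F n in sequentially. a < Rf (u n) i"
    proof (intro always_eventually allI)
      fix n have "Rf t i \<le> Rf (u n) i" using R_mono[of t "u n"] u(1) by (simp add: le_fun_def less_imp_le)
      then show "a < Rf (u n) i" using \<open>a < Rf t i\<close> by simp
    qed
  next
    fix a assume a: "a > Rf t i"
    obtain k l where kl: "gv k l > t" "orb k l i < Rf t i + (a - Rf t i)"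
      using R_approx[of "a - Rf t i" t i] a by auto
    have "\<forall>\<^sub>F n in sequentially. u n < gv k l" using order_tendstoD(2)[OF u(2) kl(1)] .
    then show "\<forall>\<^sub>F n in sequentially. Rf (u n) i < a"
    proof (rule eventually_mono)
      fix n assume "u n < gv k l"
      then have "Rf (u n) i \<le> orb k l i" using R_le_orb by (simp add: le_fun_def)
      then show "Rf (u n) i < a" using kl by simp
    qed
  qed
qed

lemma sandwich_fun:
  fixes f g h :: "nat \<Rightarrow> 'd config"
  assumes "\<And>n. f n \<le> g n" "\<And>n. g n \<le> h n" "f \<longlonglongrightarrow> l" "h \<longlonglongrightarrow> l"
  shows "g \<longlonglongrightarrow> l"
  unfolding tendsto_fun_iff
proof
  fix i
  show "(\<lambda>n. g n i) \<longlonglongrightarrow> l i"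
    by (rule tendsto_sandwich[of "\<lambda>n. f n i" _ _ "\<lambda>n. h n i"])
      (use assms in \<open>auto simp: le_fun_def tendsto_fun_iff\<close>)
qed

lemma L_in: "Lf t \<in> Mtilde x"
proof -
  obtain ks ls where kl: "\<forall>n::nat. t - inverse (real (Suc n)) < gv (ks n) (ls n) \<and> gv (ks n) (ls n) < t"
    using seq_below by blast
  have g: "(\<lambda>n. gv (ks n) (ls n)) \<longlonglongrightarrow> t" using lim_below[OF kl] .
  have "(\<lambda>n. orb (ks n) (ls n)) \<longlonglongrightarrow> Lf t"
  proof (rule sandwich_fun[of "\<lambda>n. Lf (gv (ks n) (ls n))" _ "\<lambda>n. Lf t"])
    show "Lf (gv (ks n) (ls n)) \<le> orb (ks n) (ls n)" for n by (rule L_le_orb) simp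
    show "orb (ks n) (ls n) \<le> Lf t" for n using kl orb_le_L by blast
    show "(\<lambda>n. Lf (gv (ks n) (ls n))) \<longlonglongrightarrow> Lf t" using L_lim[where u="\<lambda>n. gv (ks n) (ls n)" and t=t] kl g by blast
  qed simp
  then show ?thesis
    by (rule Lim_in_closed_set[OF closed_Mtilde, rotated 2]) (auto simp: orb_in_Mtilde)
qed

lemma R_in: "Rf t \<in> Mtilde x"
proof -
  obtain ks ls where kl: "\<forall>n::nat. t < gv (ks n) (ls n) \<and> gv (ks n) (ls n) < t + inverse (real (Suc n))"
    using seq_above by blast
  have g: "(\<lambda>n. gv (ks n) (ls n)) \<longlonglongrightarrow> t" using lim_above[OF kl] .
  have "(\<lambda>n. orb (ks n) (ls n)) \<longlonglongrightarrow> Rf t"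
  proof (rule sandwich_fun[of "\<lambda>n. Rf t" _ "\<lambda>n. Rf (gv (ks n) (ls n))"])
    show "orb (ks n) (ls n) \<le> Rf (gv (ks n) (ls n))" for n by (rule orb_le_R) simp
    show "Rf t \<le> orb (ks n) (ls n)" for n using kl R_le_orb by blast
    show "(\<lambda>n. Rf (gv (ks n) (ls n))) \<longlonglongrightarrow> Rf t" using R_lim[where u="\<lambda>n. gv (ks n) (ls n)" and t=t] kl g by blast
  qed simp
  then show ?thesis
    by (rule Lim_in_closed_set[OF closed_Mtilde, rotated 2]) (auto simp: orb_in_Mtilde)
qed

lemma L_rec: "Lf t \<in> Mrec \<omega> x"
proof -
  obtain ks ls where kl: "\<forall>n::nat. 0 - inverse (real (Suc n)) < gv (ks n) (ls n) \<and> gv (ks n) (ls n) < 0"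
    using seq_below by blast
  have g: "(\<lambda>n. t + gv (ks n) (ls n)) \<longlonglongrightarrow> t"
    using tendsto_add[OF tendsto_const lim_below[OF kl], of t] by simp
  have "(\<lambda>n. tau (ks n) (ls n) (Lf t)) \<longlonglongrightarrow> Lf t"
    unfolding L_shift using L_lim[OF _ g] kl by simp
  moreover have "\<forall>n. ip \<omega> (ks n) + real_of_int (ls n) \<noteq> 0" using kl unfolding gv_def by (metis less_irrefl)
  ultimately show ?thesis unfolding Mrec_def using L_in by blast
qed

lemma R_rec: "Rf t \<in> Mrec \<omega> x"
proof -
  obtain ks ls where kl: "\<forall>n::nat. 0 < gv (ks n) (ls n) \<and> gv (ks n) (ls n) < 0 + inverse (real (Suc n))"
    using seq_above by blast
  have g: "(\<lambda>n. t + gv (ks n) (ls n)) \<longlonglongrightarrow> t"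
    using tendsto_add[OF tendsto_const lim_above[OF kl], of t] by simp
  have "(\<lambda>n. tau (ks n) (ls n) (Rf t)) \<longlonglongrightarrow> Rf t"
    unfolding R_shift using R_lim[OF _ g] kl by simp
  moreover have "\<forall>n. ip \<omega> (ks n) + real_of_int (ls n) \<noteq> 0" using kl unfolding gv_def by (metis less_irrefl)
  ultimately show ?thesis unfolding Mrec_def using R_in by blast
qed

end


lemma open_coord_gt: "open {v :: 'a \<Rightarrow> real. a < v i}"
  by (rule open_Collect_less) (auto intro: continuous_on_const)

lemma open_coord_lt: "open {v :: 'a \<Rightarrow> real. v i < a}"
  by (rule open_Collect_less) (auto intro: continuous_on_const)

lemma closed_le_fun: "closed {v :: 'a \<Rightarrow> real. v \<le> a}"
  unfolding le_fun_def
  by (intro closed_Collect_all closed_Collect_le) (auto intro: continuous_on_const)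

lemma closed_ge_fun: "closed {v :: 'a \<Rightarrow> real. a \<le> v}"
  unfolding le_fun_def
  by (intro closed_Collect_all closed_Collect_le) (auto intro: continuous_on_const)

context BK
begin

lemma closure_hit:
  assumes "w \<in> Mtilde x" "open U" "w \<in> U"
  shows "\<exists>k l. orb k l \<in> U"
proof -
  have "w \<in> closure Orb" using assms(1) by (simp add: Mtilde_def Orb_def)
  then have "Orb \<inter> U \<noteq> {}" using assms(2,3) unfolding closure_iff_nhds_not_empty by blast
  then show ?thesis unfolding Orb_def orb_def by blast
qed

lemma lemK:
  assumes w: "w \<in> Mtilde x" and n1: "\<not> w \<le> Lf t" and n2: "\<not> Rf t \<le> w"
  shows "\<exists>k l. gv k l = t \<and> w = orb k l"
proof -
  obtain i where i: "Lf t i < w i" using n1 unfolding le_fun_def by (meson not_le)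
  obtain j where j: "w j < Rf t j" using n2 unfolding le_fun_def by (meson not_le)
  define V where "V = {v. Lf t i < v i} \<inter> {v. v j < Rf t j}"
  have oV: "open V" unfolding V_def by (intro open_Int open_coord_gt open_coord_lt)
  have hit: "\<exists>k l. gv k l = t \<and> orb k l \<in> U" if U: "open U" "w \<in> U" "U \<subseteq> V" for U
  proof -
    obtain k l where kl: "orb k l \<in> U" using closure_hit[OF w U(1,2)] by blast
    then have "orb k l \<in> V" using U(3) by blast
    then have a: "Lf t i < orb k l i" "orb k l j < Rf t j" unfolding V_def by auto
    have "gv k l = t"
    proof (rule ccontr)
      assume "gv k l \<noteq> t"
      then consider "gv k l < t" | "gv k l > t" by linarith
      then show False
      proof cases
        case 1 then have "orb k l i \<le> Lf t i" using orb_le_L[OF 1] by (simp add: le_fun_def)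
          then show False using a by simp
      next
        case 2 then have "Rf t j \<le> orb k l j" using R_le_orb[OF 2] by (simp add: le_fun_def)
          then show False using a by simp
      qed
    qed
    then show ?thesis using kl by blast
  qed
  have wV: "w \<in> V" using i j by (simp add: V_def)
  obtain k l where kl: "gv k l = t" "orb k l \<in> V"
    using hit[OF oV wV order_refl] by blast
  have "w = orb k l"
  proof (rule ccontr)
    assume "w \<noteq> orb k l"
    then obtain m where m: "w m \<noteq> orb k l m" by auto
    then consider "w m < orb k l m" | "w m > orb k l m" by linarith
    then show False
    proof cases
      case 1
      have o: "open (V \<inter> {v. v m < orb k l m})" by (intro open_Int oV open_coord_lt)
      have "w \<in> V \<inter> {v. v m < orb k l m}" using wV 1 by simp
      then obtain k' l' where kl': "gv k' l' = t" "orb k' l' \<in> V \<inter> {v. v m < orb k l m}"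
        using hit[OF o _ Int_lower1] by blast
      have "orb k' l' = orb k l" using eq_orb kl'(1) kl(1) by simp
      then show False using kl'(2) by simp
    next
      case 2
      have o: "open (V \<inter> {v. orb k l m < v m})" by (intro open_Int oV open_coord_gt)
      have "w \<in> V \<inter> {v. orb k l m < v m}" using wV 2 by simp
      then obtain k' l' where kl': "gv k' l' = t" "orb k' l' \<in> V \<inter> {v. orb k l m < v m}"
        using hit[OF o _ Int_lower1] by blast
      have "orb k' l' = orb k l" using eq_orb kl'(1) kl(1) by simp
      then show False using kl'(2) by simp
    qed
  qed
  then show ?thesis using kl by blast
qed

lemma compar: assumes "w \<in> Mtilde x" shows "w \<le> orb k l \<or> orb k l \<le> w"
proof -
  let ?t = "gv k l"
  have h: "w \<le> Lf ?t \<or> Rf ?t \<le> w \<or> (\<exists>k' l'. gv k' l' = ?t \<and> w = orb k' l')"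
    using lemK[OF assms] by blast
  have a: "Lf ?t \<le> orb k l" by (rule L_le_orb) simp
  have b: "orb k l \<le> Rf ?t" by (rule orb_le_R) simp
  show ?thesis
  proof (cases "w \<le> Lf ?t")
    case True
    have "w \<le> orb k l" using True a by (rule order.trans)
    then show ?thesis by simp
  next
    case False
    show ?thesis
    proof (cases "Rf ?t \<le> w")
      case True
      have "orb k l \<le> w" using b True by (rule order.trans)
      then show ?thesis by simp
    next
      case False
      then obtain k' l' where "gv k' l' = ?t" "w = orb k' l'" using h \<open>\<not> w \<le> Lf ?t\<close> by blast
      then have "w = orb k l" using eq_orb[of k' l' k l] by simp
      then show ?thesis by simp
    qed
  qed
qed

lemma claimA:
  assumes w: "w \<in> Mtilde x"
  shows "(\<exists>t. w = Lf t) \<or> (\<exists>t. w = Rf t) \<or>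
         (\<exists>k l. w = orb k l \<and> w \<noteq> Lf (gv k l) \<and> w \<noteq> Rf (gv k l))"
proof -
  define A where "A = {gv k l | k l. orb k l \<le> w}"
  let ?l0 = "\<lfloor>w 0 - x 0\<rfloor> - 2"
  have "\<not> w \<le> orb 0 ?l0"
  proof
    assume "w \<le> orb 0 ?l0"
    then have "w 0 \<le> x 0 + real_of_int ?l0" by (simp add: le_fun_def orb_0l)
    then show False by linarith
  qed
  then have "orb 0 ?l0 \<le> w" using compar[OF w] by blast
  then have Ane: "A \<noteq> {}" unfolding A_def by blast
  have Abd: "bdd_above A"
  proof (rule bdd_aboveI[of _ "w 0 - x 0 + 1"])
    fix g assume "g \<in> A"
    then obtain k l where "g = gv k l" "orb k l \<le> w" unfolding A_def by blast
    moreover have "orb k l 0 \<le> w 0" using \<open>orb k l \<le> w\<close> by (simp add: le_fun_def)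
    ultimately show "g \<le> w 0 - x 0 + 1" using orb_bound[of k l 0] by (simp add: abs_le_iff)
  qed
  define t where "t = Sup A"
  have Lw: "Lf t \<le> w"
    unfolding le_fun_def
  proof
    fix i show "Lf t i \<le> w i" unfolding Lf_def
    proof (rule cSup_least[OF Lset_ne])
      fix y assume "y \<in> {orb k l i | k l. gv k l < t}"
      then obtain k l where y: "y = orb k l i" "gv k l < t" by blast
      then obtain a where "a \<in> A" "gv k l < a" using less_cSup_iff[OF Ane Abd] t_def by blast
      then obtain k' l' where "a = gv k' l'" "orb k' l' \<le> w" unfolding A_def by blast
      then have "orb k l \<le> w" using mono_orb[of k l k' l'] \<open>gv k l < a\<close> by (metis less_imp_le order_trans)
      then show "y \<le> w i" using y by (simp add: le_fun_def)
    qed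
  qed
  have wR: "w \<le> Rf t"
    unfolding le_fun_def
  proof
    fix i show "w i \<le> Rf t i" unfolding Rf_def
    proof (rule cInf_greatest[OF Rset_ne])
      fix y assume "y \<in> {orb k l i | k l. gv k l > t}"
      then obtain k l where y: "y = orb k l i" "gv k l > t" by blast
      have "\<not> orb k l \<le> w"
      proof
        assume "orb k l \<le> w"
        then have "gv k l \<in> A" unfolding A_def by blast
        then have "gv k l \<le> t" unfolding t_def using Abd by (rule cSup_upper)
        then show False using y by simp
      qed
      then have "w \<le> orb k l" using compar[OF w] by blast
      then show "w i \<le> y" using y by (simp add: le_fun_def)
    qed
  qed
  have "w \<le> Lf t \<or> Rf t \<le> w \<or> (\<exists>k l. gv k l = t \<and> w = orb k l)"
    using lemK[OF w] by blast
  then show ?thesis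
  proof (elim disjE)
    assume "w \<le> Lf t" then show ?thesis using Lw by (metis order_antisym)
  next
    assume "Rf t \<le> w" then show ?thesis using wR by (metis order_antisym)
  next
    assume "\<exists>k l. gv k l = t \<and> w = orb k l"
    then obtain k l where "gv k l = t" "w = orb k l" by blast
    then show ?thesis by blast
  qed
qed

lemma Mrec_char: "Mrec \<omega> x = range Lf \<union> range Rf"
proof
  show "range Lf \<union> range Rf \<subseteq> Mrec \<omega> x" using L_rec R_rec by blast
next
  show "Mrec \<omega> x \<subseteq> range Lf \<union> range Rf"
  proof
    fix w assume wM: "w \<in> Mrec \<omega> x"
    then have w: "w \<in> Mtilde x" unfolding Mrec_def by blast
    obtain ks ls where rec: "\<forall>n. ip \<omega> (ks n) + real_of_int (ls n) \<noteq> 0"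
      "(\<lambda>n. tau (ks n) (ls n) w) \<longlonglongrightarrow> w"
      using wM unfolding Mrec_def by blast
    show "w \<in> range Lf \<union> range Rf"
    proof (rule ccontr)
      assume nin: "w \<notin> range Lf \<union> range Rf"
      then obtain k l where kl: "w = orb k l" "w \<noteq> Lf (gv k l)" "w \<noteq> Rf (gv k l)"
        using claimA[OF w] by blast
      let ?t = "gv k l"
      let ?C = "{v. v \<le> Lf ?t} \<union> {v. Rf ?t \<le> v}"
      have "w \<in> ?C"
      proof (rule Lim_in_closed_set[OF _ _ _ rec(2)])
        show "closed ?C" by (intro closed_Un closed_le_fun closed_ge_fun)
        show "sequentially \<noteq> bot" by simp
        show "\<forall>\<^sub>F n in sequentially. tau (ks n) (ls n) w \<in> ?C"
        proof (intro always_eventually allI)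
          fix n
          have e: "tau (ks n) (ls n) w = orb (ks n + k) (ls n + l)"
            using kl(1) by (simp add: orb_def tau_tau)
          have g: "gv (ks n + k) (ls n + l) = gv (ks n) (ls n) + ?t" by (simp add: gv_add)
          have "gv (ks n) (ls n) \<noteq> 0" using rec(1) by (simp add: gv_def)
          then consider "gv (ks n) (ls n) < 0" | "gv (ks n) (ls n) > 0" by linarith
          then show "tau (ks n) (ls n) w \<in> ?C"
          proof cases
            case 1 then show ?thesis using orb_le_L[of "ks n + k" "ls n + l" ?t] e g by simp
          next
            case 2 then show ?thesis using R_le_orb[of ?t "ks n + k" "ls n + l"] e g by simp
          qed
        qed
      qed
      moreover have "Lf ?t \<le> w" "w \<le> Rf ?t"
        using L_le_orb[of ?t k l] orb_le_R[of k l ?t] kl(1) by auto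
      ultimately show False using kl by (metis (no_types, lifting) Un_iff mem_Collect_eq order_antisym)
    qed
  qed
qed

end


lemma limpt_seq:
  fixes f :: "nat \<Rightarrow> 'a::topological_space"
  assumes "f \<longlonglongrightarrow> y" "\<And>n. f n \<in> S" "\<And>n. f n \<noteq> y"
  shows "y islimpt S"
proof (rule islimptI)
  fix T assume T: "y \<in> T" "open T"
  have "eventually (\<lambda>n. f n \<in> T) sequentially" using topological_tendstoD[OF assms(1) T(2,1)] .
  then obtain n where "f n \<in> T" using eventually_sequentially by (metis order_refl)
  then show "\<exists>y'\<in>S. y' \<in> T \<and> y' \<noteq> y" using assms(2,3) by blast
qed

context BK
begin

lemma case1:
  assumes nj: "\<forall>t. Lf t = Rf t"
  shows "connected (Mrec \<omega> x)"
proof -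
  have M: "Mrec \<omega> x = range Lf" using Mrec_char nj by auto
  have "continuous_on UNIV Lf"
  proof (rule continuous_on_coordinatewise_then_product)
    fix i
    show "continuous_on UNIV (\<lambda>t. Lf t i)"
    proof (rule continuous_at_imp_continuous_on, intro ballI)
      fix t :: real
      show "isCont (\<lambda>t. Lf t i) t"
        unfolding continuous_at_eps_delta
      proof (intro allI impI)
        fix e :: real assume e: "e > 0"
        obtain k1 l1 where 1: "gv k1 l1 < t" "Lf t i - e < orb k1 l1 i" using L_approx[OF e] by blast
        obtain k2 l2 where 2: "gv k2 l2 > t" "orb k2 l2 i < Rf t i + e" using R_approx[OF e] by blast
        define d where "d = min (t - gv k1 l1) (gv k2 l2 - t)"
        have dp: "d > 0" using 1 2 by (simp add: d_def)
        have "\<forall>s. dist s t < d \<longrightarrow> dist (Lf s i) (Lf t i) < e"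
        proof (intro allI impI)
          fix s assume "dist s t < d"
          then have s: "gv k1 l1 < s" "s < gv k2 l2" by (auto simp: d_def dist_real_def)
          have "orb k1 l1 i \<le> Lf s i" using orb_le_L[OF s(1)] by (simp add: le_fun_def)
          moreover have "Rf s i \<le> orb k2 l2 i" using R_le_orb[OF s(2)] by (simp add: le_fun_def)
          ultimately show "dist (Lf s i) (Lf t i) < e"
            using 1 2 nj by (simp add: dist_real_def abs_less_iff)
        qed
        then show "\<exists>d>0. \<forall>s. dist s t < d \<longrightarrow> dist (Lf s i) (Lf t i) < e" using dp by blast
      qed
    qed
  qed
  then have "connected (Lf ` UNIV)" by (rule connected_continuous_image) simp
  then show ?thesis using M by simp
qed

lemma jumps_dense:
  assumes j0: "Lf t0 \<noteq> Rf t0" and ab: "a < b"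
  shows "\<exists>t. a < t \<and> t < b \<and> Lf t \<noteq> Rf t"
proof -
  obtain k l where kl: "a - t0 < gv k l" "gv k l < b - t0" using dense ab by (metis diff_strict_right_mono)
  have "tau k l (Lf t0) \<noteq> tau k l (Rf t0)" using j0 tau_inj by blast
  then have "Lf (t0 + gv k l) \<noteq> Rf (t0 + gv k l)" by (simp add: L_shift R_shift)
  then show ?thesis using kl by (intro exI[of _ "t0 + gv k l"]) auto
qed

lemma Kp: assumes "w \<in> range Lf \<union> range Rf" shows "w \<le> Lf t \<or> Rf t \<le> w"
proof -
  consider s where "w = Lf s" | s where "w = Rf s" using assms by blast
  then show ?thesis
  proof cases
    case 1
    show ?thesis
    proof (cases "s \<le> t")
      case True then show ?thesis using 1 L_mono by blast
    next
      case False then show ?thesis using 1 R_le_L[of t s] by simp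
    qed
  next
    case 2
    show ?thesis
    proof (cases "s < t")
      case True then show ?thesis using 2 R_le_L[of s t] by simp
    next
      case False then show ?thesis using 2 R_mono[of t s] by simp
    qed
  qed
qed

lemma phase: "\<exists>tc. Lf tc i \<le> c \<and> c \<le> Rf tc i"
proof -
  define S where "S = {gv k l | k l. orb k l i \<le> c}"
  let ?l = "\<lfloor>c - x i\<rfloor> - 1"
  have "orb 0 ?l i \<le> c" by (simp add: orb_0l) linarith
  then have Sne: "S \<noteq> {}" unfolding S_def by blast
  have Sbd: "bdd_above S"
  proof (rule bdd_aboveI[of _ "c - x i + 1"])
    fix g assume "g \<in> S"
    then obtain k l where "g = gv k l" "orb k l i \<le> c" unfolding S_def by blast
    then show "g \<le> c - x i + 1" using orb_bound[of k l i] by (simp add: abs_le_iff)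
  qed
  define tc where "tc = Sup S"
  have "Lf tc i \<le> c" unfolding Lf_def
  proof (rule cSup_least[OF Lset_ne])
    fix y assume "y \<in> {orb k l i | k l. gv k l < tc}"
    then obtain k l where y: "y = orb k l i" "gv k l < tc" by blast
    then obtain a where "a \<in> S" "gv k l < a" using less_cSup_iff[OF Sne Sbd] tc_def by blast
    then obtain k' l' where "a = gv k' l'" "orb k' l' i \<le> c" unfolding S_def by blast
    moreover have "orb k l i \<le> orb k' l' i" using mono_orb[of k l k' l'] \<open>gv k l < a\<close> \<open>a = gv k' l'\<close>
      by (simp add: le_fun_def)
    ultimately show "y \<le> c" using y by simp
  qed
  moreover have "c \<le> Rf tc i" unfolding Rf_def
  proof (rule cInf_greatest[OF Rset_ne])
    fix y assume "y \<in> {orb k l i | k l. gv k l > tc}"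
    then obtain k l where y: "y = orb k l i" "gv k l > tc" by blast
    have "\<not> orb k l i \<le> c"
    proof
      assume "orb k l i \<le> c"
      then have "gv k l \<in> S" unfolding S_def by blast
      then have "gv k l \<le> tc" unfolding tc_def using Sbd by (rule cSup_upper)
      then show False using y by simp
    qed
    then show "c \<le> y" using y by simp
  qed
  ultimately show ?thesis by blast
qed

lemma sep:
  assumes j0: "Lf t0 \<noteq> Rf t0"
    and y: "y \<in> range Lf \<union> range Rf" and z: "z \<in> range Lf \<union> range Rf" and yz: "y i < z i"
  shows "\<exists>t. Lf t \<noteq> Rf t \<and> y \<le> Lf t \<and> Rf t \<le> z"
proof -
  define a where "a = y i"
  define b where "b = z i"
  have ab: "a < b" using yz by (simp add: a_def b_def)
  obtain tc where tc: "Lf tc i \<le> (a + b) / 2" "(a + b) / 2 \<le> Rf tc i" using phase by blast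
  have m1: "a < (a + b) / 2" "(a + b) / 2 < b" using ab by (simp_all add: field_simps)
  have Utc1: "a < Rf tc i" using m1(1) tc(2) by (rule less_le_trans)
  have Utc2: "Lf tc i < b" using tc(1) m1(2) by (rule le_less_trans)
  note Utc = Utc1 Utc2
  have "\<exists>t. Lf t \<noteq> Rf t \<and> a < Rf t i \<and> Lf t i < b"
  proof (cases "\<exists>s s'. s < s' \<and> a < Rf s i \<and> Lf s' i < b")
    case True
    then obtain s s' where ss: "s < s'" "a < Rf s i" "Lf s' i < b" by blast
    obtain t where t: "s < t" "t < s'" "Lf t \<noteq> Rf t" using jumps_dense[OF j0 ss(1)] by blast
    have "Rf s i \<le> Rf t i" using R_mono[of s t] t by (simp add: le_fun_def)
    moreover have "Lf t i \<le> Lf s' i" using L_mono[of t s'] t by (simp add: le_fun_def)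
    ultimately show ?thesis using t ss by (intro exI[of _ t]) auto
  next
    case False
    have "Lf tc i \<le> a" unfolding Lf_def
    proof (rule cSup_least[OF Lset_ne])
      fix v assume "v \<in> {orb k l i | k l. gv k l < tc}"
      then obtain k l where v: "v = orb k l i" "gv k l < tc" by blast
      have "\<not> a < Rf (gv k l) i" using False v(2) Utc(2) by blast
      moreover have "orb k l i \<le> Rf (gv k l) i" using orb_le_R[of k l "gv k l"] by (simp add: le_fun_def)
      ultimately show "v \<le> a" using v by simp
    qed
    then have "Lf tc \<noteq> Rf tc" using Utc by auto
    then show ?thesis using Utc by blast
  qed
  then obtain t where t: "Lf t \<noteq> Rf t" "a < Rf t i" "Lf t i < b" by blast
  have "\<not> Rf t \<le> y"
  proof
    assume "Rf t \<le> y" then have "Rf t i \<le> y i" by (simp add: le_fun_def)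
    then show False using t(2) a_def by simp
  qed
  then have "y \<le> Lf t" using Kp[OF y, of t] by blast
  moreover have "\<not> z \<le> Lf t"
  proof
    assume "z \<le> Lf t" then have "z i \<le> Lf t i" by (simp add: le_fun_def)
    then show False using t(3) b_def by simp
  qed
  then have "Rf t \<le> z" using Kp[OF z, of t] by blast
  ultimately show ?thesis using t(1) by blast
qed

end


context BK
begin

lemma rec_approx:
  "\<exists>ks ls. (\<forall>n. gv (ks n) (ls n) \<noteq> 0) \<and>
     (\<lambda>n. Lf (t + gv (ks n) (ls n))) \<longlonglongrightarrow> Lf t \<and>
     (\<forall>n. Lf (t + gv (ks n) (ls n)) = tau (ks n) (ls n) (Lf t))"
proof -
  obtain ks ls where kl: "\<forall>n::nat. 0 - inverse (real (Suc n)) < gv (ks n) (ls n) \<and> gv (ks n) (ls n) < 0"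
    using seq_below by blast
  have g: "(\<lambda>n. t + gv (ks n) (ls n)) \<longlonglongrightarrow> t"
    using tendsto_add[OF tendsto_const lim_below[OF kl], of t] by simp
  have "(\<lambda>n. Lf (t + gv (ks n) (ls n))) \<longlonglongrightarrow> Lf t"
    using L_lim[OF _ g] kl by simp
  moreover have "\<forall>n. gv (ks n) (ls n) \<noteq> 0" using kl by (metis less_irrefl)
  ultimately show ?thesis by (auto simp: L_shift)
qed

lemma rec_approxR:
  "\<exists>ks ls. (\<forall>n. gv (ks n) (ls n) \<noteq> 0) \<and>
     (\<lambda>n. Rf (t + gv (ks n) (ls n))) \<longlonglongrightarrow> Rf t \<and>
     (\<forall>n. Rf (t + gv (ks n) (ls n)) = tau (ks n) (ls n) (Rf t))"
proof -
  obtain ks ls where kl: "\<forall>n::nat. 0 < gv (ks n) (ls n) \<and> gv (ks n) (ls n) < 0 + inverse (real (Suc n))"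
    using seq_above by blast
  have g: "(\<lambda>n. t + gv (ks n) (ls n)) \<longlonglongrightarrow> t"
    using tendsto_add[OF tendsto_const lim_above[OF kl], of t] by simp
  have "(\<lambda>n. Rf (t + gv (ks n) (ls n))) \<longlonglongrightarrow> Rf t"
    using R_lim[OF _ g] kl by simp
  moreover have "\<forall>n. gv (ks n) (ls n) \<noteq> 0" using kl by (metis less_irrefl)
  ultimately show ?thesis by (auto simp: R_shift)
qed

lemma perfect_M: "perfect_set (range Lf \<union> range Rf)"
  unfolding perfect_set_def
proof
  fix y assume "y \<in> range Lf \<union> range Rf"
  then consider t where "y = Lf t" | t where "y = Rf t" by blast
  then show "y islimpt (range Lf \<union> range Rf)"
  proof cases
    case 1
    obtain ks ls where kl: "\<forall>n. gv (ks n) (ls n) \<noteq> 0"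
      "(\<lambda>n. Lf (t + gv (ks n) (ls n))) \<longlonglongrightarrow> Lf t"
      "\<forall>n. Lf (t + gv (ks n) (ls n)) = tau (ks n) (ls n) (Lf t)"
      using rec_approx by blast
    show ?thesis unfolding 1
    proof (rule limpt_seq[OF kl(2)])
      fix n
      show "Lf (t + gv (ks n) (ls n)) \<in> range Lf \<union> range Rf" by blast
      show "Lf (t + gv (ks n) (ls n)) \<noteq> Lf t"
      proof
        assume "Lf (t + gv (ks n) (ls n)) = Lf t"
        then have "tau (ks n) (ls n) (Lf t) = Lf t" using kl(3) by simp
        then have "gv (ks n) (ls n) = 0" using lemS Mtilde_Bd L_in by blast
        then show False using kl(1) by blast
      qed
    qed
  next
    case 2
    obtain ks ls where kl: "\<forall>n. gv (ks n) (ls n) \<noteq> 0"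
      "(\<lambda>n. Rf (t + gv (ks n) (ls n))) \<longlonglongrightarrow> Rf t"
      "\<forall>n. Rf (t + gv (ks n) (ls n)) = tau (ks n) (ls n) (Rf t)"
      using rec_approxR by blast
    show ?thesis unfolding 2
    proof (rule limpt_seq[OF kl(2)])
      fix n
      show "Rf (t + gv (ks n) (ls n)) \<in> range Lf \<union> range Rf" by blast
      show "Rf (t + gv (ks n) (ls n)) \<noteq> Rf t"
      proof
        assume "Rf (t + gv (ks n) (ls n)) = Rf t"
        then have "tau (ks n) (ls n) (Rf t) = Rf t" using kl(3) by simp
        then have "gv (ks n) (ls n) = 0" using lemS Mtilde_Bd R_in by blast
        then show False using kl(1) by blast
      qed
    qed
  qed
qed

lemma closed_M: "closed (range Lf \<union> range Rf)"
  unfolding closed_def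
proof (subst open_subopen, intro ballI)
  let ?M = "range Lf \<union> range Rf"
  have MM: "?M \<subseteq> Mtilde x" using L_in R_in by blast
  fix v assume v: "v \<in> - ?M"
  show "\<exists>T. open T \<and> v \<in> T \<and> T \<subseteq> - ?M"
  proof (cases "v \<in> Mtilde x")
    case False
    then show ?thesis using MM closed_Mtilde by (intro exI[of _ "- Mtilde x"]) (auto simp: open_Compl)
  next
    case True
    then obtain k l where kl: "v = orb k l" "v \<noteq> Lf (gv k l)" "v \<noteq> Rf (gv k l)"
      using claimA v by blast
    let ?t = "gv k l"
    have le1: "Lf ?t \<le> v" using L_le_orb[of ?t k l] kl(1) by simp
    have le2: "v \<le> Rf ?t" using orb_le_R[of k l ?t] kl(1) by simp
    obtain i where i: "Lf ?t i \<noteq> v i" using kl(2) by (metis ext)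
    then have i': "Lf ?t i < v i" using le1 by (simp add: le_fun_def order_less_le)
    obtain j where j: "v j \<noteq> Rf ?t j" using kl(3) by (metis ext)
    then have j': "v j < Rf ?t j" using le2 by (simp add: le_fun_def order_less_le)
    define T where "T = {u. Lf ?t i < u i} \<inter> {u. u j < Rf ?t j}"
    have oT: "open T" unfolding T_def by (intro open_Int open_coord_gt open_coord_lt)
    have vT: "v \<in> T" using i' j' by (simp add: T_def)
    have "T \<subseteq> - ?M"
    proof
      fix u assume uT: "u \<in> T"
      show "u \<in> - ?M"
      proof
        assume uM: "u \<in> ?M"
        then have uMt: "u \<in> Mtilde x" using MM by blast
        have n1: "\<not> u \<le> Lf ?t"
        proof
          assume "u \<le> Lf ?t" then have "u i \<le> Lf ?t i" by (simp add: le_fun_def)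
          then show False using uT by (simp add: T_def)
        qed
        have n2: "\<not> Rf ?t \<le> u"
        proof
          assume "Rf ?t \<le> u" then have "Rf ?t j \<le> u j" by (simp add: le_fun_def)
          then show False using uT by (simp add: T_def)
        qed
        obtain k' l' where "gv k' l' = ?t" "u = orb k' l'" using lemK[OF uMt n1 n2] by blast
        then have "u = v" using eq_orb[of k' l' k l] kl(1) by simp
        then show False using uM v by blast
      qed
    qed
    then show ?thesis using oT vT by blast
  qed
qed

lemma totdisc_M:
  assumes j0: "Lf t0 \<noteq> Rf t0"
  shows "totally_disconnected_set (range Lf \<union> range Rf)"
  unfolding totally_disconnected_set_def
proof (intro allI impI)
  let ?M = "range Lf \<union> range Rf"
  fix C assume C: "C \<subseteq> ?M" "connected C"
  have key: "False" if y: "y \<in> C" and z: "z \<in> C" and yz: "y i < z i" for y z i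
  proof -
    obtain t where t: "Lf t \<noteq> Rf t" "y \<le> Lf t" "Rf t \<le> z"
      using sep[of t0 y z i] j0 yz y z C(1) by blast
    let ?A = "{v. v \<le> Lf t}"
    let ?B = "{v. Rf t \<le> v}"
    have "?A \<inter> ?B \<inter> C = {}"
    proof (rule ccontr)
      assume "?A \<inter> ?B \<inter> C \<noteq> {}"
      then obtain v where "v \<le> Lf t" "Rf t \<le> v" by blast
      then have "Rf t \<le> Lf t" by (rule order.trans[rotated])
      then show False using L_le_R[of t] t(1) by (simp add: order_antisym)
    qed
    moreover have "C \<subseteq> ?A \<union> ?B" using Kp C(1) by blast
    ultimately have "?A \<inter> C = {} \<or> ?B \<inter> C = {}"
      using connected_closedD[OF C(2)] closed_le_fun closed_ge_fun by blast
    then show False using y z t by blast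
  qed
  show "\<exists>a. C \<subseteq> {a}"
  proof (cases "C = {}")
    case True then show ?thesis by blast
  next
    case False
    then obtain a where a: "a \<in> C" by blast
    have "C \<subseteq> {a}"
    proof
      fix b assume b: "b \<in> C"
      show "b \<in> {a}"
      proof (rule ccontr)
        assume "b \<notin> {a}"
        then obtain i where "a i \<noteq> b i" by (metis ext singletonI)
        then consider "a i < b i" | "b i < a i" by linarith
        then show False
        proof cases
          case 1 then show False using key[OF a b] by blast
        next
          case 2 then show False using key[OF b a] by blast
        qed
      qed
    qed
    then show ?thesis by blast
  qed
qed

lemma dichotomy: "connected (Mrec \<omega> x) \<or> cantor_set (Mrec \<omega> x)"
proof (cases "\<forall>t. Lf t = Rf t")
  case True then show ?thesis using case1 by blast
next
  case False
  then obtain t0 where "Lf t0 \<noteq> Rf t0" by blast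
  then have "cantor_set (range Lf \<union> range Rf)"
    unfolding cantor_set_def using closed_M perfect_M totdisc_M by blast
  then show ?thesis using Mrec_char by simp
qed

end

theorem mainTheorem9:
  fixes r :: real and S :: "'d::finite site \<Rightarrow> 'd config \<Rightarrow> real"
    and \<omega> :: "real ^ 'd" and x :: "'d config"
  assumes "local_potentials r S"
    and "\<exists>a. \<omega> $ a \<notin> \<rat>"
    and "global_minimizer r S x"
    and "birkhoff x"
    and "has_rotation_vector x \<omega>"
    and "\<forall>k l. ip \<omega> k + real_of_int l = 0 \<longrightarrow> tau k l x = x"
  shows "connected (Mrec \<omega> x) \<or> cantor_set (Mrec \<omega> x)"
proof -
  interpret BK \<omega> x using assms(2,4,5,6) by unfold_locales
  show ?thesis by (rule dichotomy)
qed



end
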